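(* Let $V:=\{\alpha\in\ell^\infty_w:\ G_{\tilde\psi,\psi}\alpha=\alpha\}$. Then $C_{\tilde\psi}$ maps $\mathcal H^\infty_w$ into $V$, and $C_{\tilde\psi}:(\mathcal H^\infty_w,\|\cdot\|_{\mathcal H^\infty_w})\to(V,\|\cdot\|_{\ell^\infty_w})$ is an isometric isomorphism (a linear, isometric bijection).
   Context: Standing setting. $\mathcal H$ is a separable complex Hilbert space with inner product $\langle\cdot,\cdot\rangle$, linear in the first and conjugate-linear in the second argument. $X$ is a countable index set. A weight is a map $w:X\to(0,\infty)$; $\ell^\infty_w$ is the Banach space of sequences $\alpha=(\alpha_k)_{k\in X}$ with $\|\alpha\|_{\ell^\infty_w}:=\sup_{k\in X}|\alpha_k|w(k)<\infty$. $\psi=(\psi_k)_{k\in X}$ is a frame for $\mathcal H$ and $\tilde\psi=(\tilde\psi_k)_{k\in X}$ is a dual frame, i.e. $f=\sum_{k}\langle f,\tilde\psi_k\rangle\psi_k=\sum_k\langle f,\psi_k\rangle\tilde\psi_k$ for all $f\in\mathcal H$ (unconditional convergence in $\mathcal H$). The cross Gram matrix $G_{\tilde\psi,\psi}$ has entries $(G_{\tilde\psi,\psi})_{k,l}=\langle\psi_l,\tilde\psi_k\rangle$ and acts by $(G_{\tilde\psi,\psi}\alpha)_k=\sum_{l\in X}\langle\psi_l,\tilde\psi_k\rangle\alpha_l$; it is assumed to define a bounded operator on $\ell^\infty_w$, meaning these series converge absolutely for every $\alpha\in\ell^\infty_w$ and $G_{\tilde\psi,\psi}:\ell^\infty_w\to\ell^\infty_w$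 is bounded (equivalently $\|G_{\tilde\psi,\psi}\|_{\mathcal B(\ell^\infty_w)}=\sup_{k}\sum_{l}|\langle\psi_l,\tilde\psi_k\rangle|\,w(k)/w(l)<\infty$). Let $\mathcal H^{00}:=\operatorname{span}\{\tilde\psi_k:k\in X\}$ (finite linear combinations), a dense subspace of $\mathcal H$. Equip $\mathcal H$ with the locally convex topology $\sigma(\mathcal H,\mathcal H^{00})$ generated by the seminorms $f\mapsto|\langle f,v\rangle|$, $v\in\mathcal H^{00}$ (Hausdorff and metrizable). Let $\overline{\mathcal H}$ be the completion of $\mathcal H$ in this topology, with $\mathcal H\subseteq\overline{\mathcal H}$, and for each $v\in\mathcal H^{00}$ let $f\mapsto\langle f,v\rangle_{\overline{\mathcal H},\mathcal H^{00}}$ be the unique continuous linear extension of $f\mapsto\langle f,v\rangle$ to $\overline{\mathcal H}$. Define $\mathcal H^\infty_w$ as the set of all $f\in\overline{\mathcal H}$ for which there is a sequence $(f_n)_{n\ge1}\subseteq\mathcal H$ converging to $f$ in $\sigma(\overline{\mathcal H},\mathcal H^{00})$ (i.e. $\langle f_n,v\rangle\to\langle f,v\rangle_{\overline{\mathcal H},\mathcal H^{00}}$ for all $v\in\mathcal H^{00}$) with $\sup_{n\in\mathbb N,k\in X}|\langle f_n,\tilde\psi_k\rangle|w(k)<\infty$. The coefficient operator is $C_{\tilde\psi}:\mathcal H^\infty_w\to\ell^\infty_w$, $C_{\tilde\psi}f=(\langle f,\tilde\psi_k\rangle_{\overline{\mathcal H},\mathcal H^{00}})_{k\in X}$, and the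 norm on $\mathcal H^\infty_w$ is $\|f\|_{\mathcal H^\infty_w}:=\|C_{\tilde\psi}f\|_{\ell^\infty_w}$. *)

theory Defs
  imports "HOL-Analysis.Analysis"
begin

text \<open>Complex Hilbert spaces (the distribution has no complex inner product class):
  a real Banach space with a complex scalar multiplication extending the real one,
  and a complex inner product, linear in the first and conjugate-linear in the
  second argument, inducing the norm.\<close>

class chilbert_space = banach +
  fixes scaleC :: "complex \<Rightarrow> 'a \<Rightarrow> 'a"
    and cinner :: "'a \<Rightarrow> 'a \<Rightarrow> complex"
  assumes scaleC_add_right: "scaleC a (x + y) = scaleC a x + scaleC a y"
    and scaleC_add_left: "scaleC (a + b) x = scaleC a x + scaleC b x"
    and scaleC_scaleC: "scaleC a (scaleC b x) = scaleC (a * b) x"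
    and scaleC_one: "scaleC 1 x = x"
    and scaleC_of_real: "scaleC (complex_of_real r) x = scaleR r x"
    and cinner_add_left: "cinner (x + y) z = cinner x z + cinner y z"
    and cinner_scaleC_left: "cinner (scaleC a x) y = a * cinner x y"
    and cinner_commute: "cinner y x = cnj (cinner x y)"
    and cinner_norm: "cinner x x = complex_of_real ((norm x)\<^sup>2)"

definition lw :: "('x \<Rightarrow> real) \<Rightarrow> ('x \<Rightarrow> complex) set" where
  "lw w = {\<alpha>. bdd_above (range (\<lambda>k. norm (\<alpha> k) * w k))}"

definition lw_norm :: "('x \<Rightarrow> real) \<Rightarrow> ('x \<Rightarrow> complex) \<Rightarrow> real" where
  "lw_norm w \<alpha> = (SUP k. norm (\<alpha> k) * w k)"

text \<open>Frames and dual frames (unconditional convergence = has_sum over the countable index set).\<close>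

definition is_frame :: "('x \<Rightarrow> 'h::chilbert_space) \<Rightarrow> bool" where
  "is_frame \<psi> \<longleftrightarrow> (\<exists>A B. 0 < A \<and> A \<le> B \<and>
     (\<forall>f. (\<lambda>k. (norm (cinner f (\<psi> k)))\<^sup>2) summable_on UNIV \<and>
          A * (norm f)\<^sup>2 \<le> (\<Sum>\<^sub>\<infinity>k. (norm (cinner f (\<psi> k)))\<^sup>2) \<and>
          (\<Sum>\<^sub>\<infinity>k. (norm (cinner f (\<psi> k)))\<^sup>2) \<le> B * (norm f)\<^sup>2))"

definition dual_frame :: "('x \<Rightarrow> 'h::chilbert_space) \<Rightarrow> ('x \<Rightarrow> 'h) \<Rightarrow> bool" where
  "dual_frame \<psi> \<psi>d \<longleftrightarrow> is_frame \<psi> \<and> is_frame \<psi>d \<and>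
     (\<forall>f. ((\<lambda>k. scaleC (cinner f (\<psi>d k)) (\<psi> k)) has_sum f) UNIV \<and>
          ((\<lambda>k. scaleC (cinner f (\<psi> k)) (\<psi>d k)) has_sum f) UNIV)"

definition gram :: "('x \<Rightarrow> 'h::chilbert_space) \<Rightarrow> ('x \<Rightarrow> 'h) \<Rightarrow> ('x \<Rightarrow> complex) \<Rightarrow> ('x \<Rightarrow> complex)" where
  "gram \<psi> \<psi>d \<alpha> = (\<lambda>k. \<Sum>\<^sub>\<infinity>l. cinner (\<psi> l) (\<psi>d k) * \<alpha> l)"

definition H00 :: "('x \<Rightarrow> 'h::chilbert_space) \<Rightarrow> 'h set" where
  "H00 \<psi>d = {v. \<exists>F c. finite F \<and> v = (\<Sum>k\<in>F. scaleC (c k) (\<psi>d k))}"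

text \<open>Completion of \<open>\<H>\<close> w.r.t. \<open>\<sigma>(\<H>,\<H>\<^sup>0\<^sup>0)\<close> (a Hausdorff metrizable topology, so
  sequences suffice): an element is represented by its pairing \<open>v \<mapsto> \<langle>f,v\<rangle>\<close> on \<open>\<H>\<^sup>0\<^sup>0\<close>
  (set to 0 outside \<open>\<H>\<^sup>0\<^sup>0\<close>), and the elements are exactly the pointwise limits of
  \<open>\<langle>f_n,\<cdot>\<rangle>\<close> for (weak Cauchy) sequences \<open>f_n\<close> in \<open>\<H>\<close>.  The vector \<open>f \<in> \<H>\<close> is
  identified with \<open>Hemb \<psi>d f\<close>; the extended pairing \<open>\<langle>F,v\<rangle>\<close> is \<open>F v\<close>.\<close>

definition Hemb :: "('x \<Rightarrow> 'h::chilbert_space) \<Rightarrow> 'h \<Rightarrow> ('h \<Rightarrow> complex)" where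
  "Hemb \<psi>d f = (\<lambda>v. if v \<in> H00 \<psi>d then cinner f v else 0)"

definition Hbar :: "('x \<Rightarrow> 'h::chilbert_space) \<Rightarrow> ('h \<Rightarrow> complex) set" where
  "Hbar \<psi>d = {F. (\<forall>v. v \<notin> H00 \<psi>d \<longrightarrow> F v = 0) \<and>
     (\<exists>fs::nat \<Rightarrow> 'h. \<forall>v\<in>H00 \<psi>d. (\<lambda>n. cinner (fs n) v) \<longlonglongrightarrow> F v)}"

definition Hinf :: "('x \<Rightarrow> real) \<Rightarrow> ('x \<Rightarrow> 'h::chilbert_space) \<Rightarrow> ('h \<Rightarrow> complex) set" where
  "Hinf w \<psi>d = {F \<in> Hbar \<psi>d. \<exists>fs::nat \<Rightarrow> 'h.
     (\<forall>v\<in>H00 \<psi>d. (\<lambda>n. cinner (fs n) v) \<longlonglongrightarrow> F v) \<and>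
     bdd_above {norm (cinner (fs n) (\<psi>d k)) * w k | n k. True}}"

definition coef :: "('x \<Rightarrow> 'h::chilbert_space) \<Rightarrow> ('h \<Rightarrow> complex) \<Rightarrow> ('x \<Rightarrow> complex)" where
  "coef \<psi>d F = (\<lambda>k. F (\<psi>d k))"

definition Hinf_norm :: "('x \<Rightarrow> real) \<Rightarrow> ('x \<Rightarrow> 'h::chilbert_space) \<Rightarrow> ('h \<Rightarrow> complex) \<Rightarrow> real" where
  "Hinf_norm w \<psi>d F = lw_norm w (coef \<psi>d F)"

end

theory Submission
  imports Defs
begin


context chilbert_space begin

lemma cinner_zero_left[simp]: "cinner 0 y = 0"
  using cinner_add_left[of 0 0 y] by simp

lemma cinner_minus_left: "cinner (- x) y = - cinner x y"
proof -
  have h: "cinner x y + cinner (-x) y = 0" using cinner_add_left[of x "-x" y] by simp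
  have "cinner (-x) y = (cinner x y + cinner (-x) y) - cinner x y" by simp
  also have "\<dots> = - cinner x y" using h by simp
  finally show ?thesis .
qed

lemma cinner_zero_right[simp]: "cinner x 0 = 0"
  using cinner_commute[of 0 x] by simp

lemma cinner_diff_left: "cinner (x - y) z = cinner x z - cinner y z"
  using cinner_add_left[of x "-y" z] by (simp add: cinner_minus_left)

lemma cinner_add_right: "cinner x (y + z) = cinner x y + cinner x z"
  by (metis cinner_commute cinner_add_left complex_cnj_add)

lemma cinner_diff_right: "cinner x (y - z) = cinner x y - cinner x z"
  by (metis cinner_commute cinner_diff_left complex_cnj_diff)

lemma cinner_scaleC_right: "cinner x (scaleC a y) = cnj a * cinner x y"
  by (metis cinner_commute cinner_scaleC_left complex_cnj_mult)

lemma cinner_sum_left: "cinner (sum f A) y = (\<Sum>i\<in>A. cinner (f i) y)"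
  by (induction A rule: infinite_finite_induct) (auto simp: cinner_add_left)

lemma cinner_sum_right: "cinner x (sum f A) = (\<Sum>i\<in>A. cinner x (f i))"
  by (induction A rule: infinite_finite_induct) (auto simp: cinner_add_right)

lemma cinner_polar:
  "cinner x y = (complex_of_real ((norm (x+y))\<^sup>2) - complex_of_real ((norm (x-y))\<^sup>2)
     + \<i> * (complex_of_real ((norm (x + scaleC \<i> y))\<^sup>2) - complex_of_real ((norm (x - scaleC \<i> y))\<^sup>2))) / 4"
proof -
  have yx: "cinner y x = cnj (cinner x y)" by (rule cinner_commute)
  have yx2: "cinner (scaleC \<i> y) x = \<i> * cnj (cinner x y)"
    by (simp add: cinner_scaleC_left yx)
  show ?thesis
    unfolding cinner_norm[symmetric]
    by (simp add: cinner_add_left cinner_add_right cinner_diff_left cinner_diff_right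
        cinner_scaleC_left cinner_scaleC_right yx yx2 cinner_commute[of "scaleC \<i> y" "scaleC \<i> y"]
        field_simps complex_eq_iff)
qed

end

lemma isCont_cinner_left: fixes y :: "'a::chilbert_space" shows "isCont (\<lambda>x. cinner x y) x0"
proof -
  have e: "(\<lambda>x. cinner x y) = (\<lambda>x. (complex_of_real ((norm (x+y))\<^sup>2) - complex_of_real ((norm (x-y))\<^sup>2)
     + \<i> * (complex_of_real ((norm (x + scaleC \<i> y))\<^sup>2) - complex_of_real ((norm (x - scaleC \<i> y))\<^sup>2))) / 4)"
    by (rule ext) (rule cinner_polar)
  show ?thesis unfolding e by (intro continuous_intros) simp
qed



lemma infsum_dominated:
  fixes s :: "nat \<Rightarrow> 'x::countable \<Rightarrow> complex" and g :: "'x \<Rightarrow> real"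
  assumes g: "g summable_on UNIV" and b: "\<And>n l. norm (s n l) \<le> g l"
    and lim: "\<And>l. (\<lambda>n. s n l) \<longlonglongrightarrow> f l"
  shows "(\<lambda>n. infsum (s n) UNIV) \<longlonglongrightarrow> infsum f UNIV"
proof -
  have g0: "\<And>l. 0 \<le> g l" using b[of 0] norm_ge_zero order_trans by blast
  have "(\<lambda>l. norm (g l)) summable_on UNIV" using g g0 by simp
  hence gi: "integrable (count_space UNIV) g"
    using abs_summable_equivalent[of g UNIV] unfolding Infinite_Set_Sum.abs_summable_on_def by simp
  have conv: "(\<lambda>n. integral\<^sup>L (count_space UNIV) (s n)) \<longlonglongrightarrow> integral\<^sup>L (count_space UNIV) f"
    by (rule integral_dominated_convergence[OF _ _ gi]) (auto intro: lim b)
  have fi: "integrable (count_space UNIV) f"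
    by (rule integrable_dominated_convergence[OF _ _ gi]) (auto intro: lim b)
  have si: "\<And>n. integrable (count_space UNIV) (s n)"
    by (rule integrable_dominated_convergence2[OF _ _ gi]) (auto intro: lim b)
  have e1: "integral\<^sup>L (count_space UNIV) f = infsum f UNIV"
    using infsetsum_infsum[of f UNIV] fi unfolding Infinite_Set_Sum.abs_summable_on_def infsetsum_def by simp
  have e2: "integral\<^sup>L (count_space UNIV) (s n) = infsum (s n) UNIV" for n
    using infsetsum_infsum[of "s n" UNIV] si[of n] unfolding Infinite_Set_Sum.abs_summable_on_def infsetsum_def by simp
  show ?thesis using conv unfolding e1 e2 .
qed

definition exh :: "nat \<Rightarrow> 'x::countable set" where
  "exh n = {l. to_nat l < n}"

lemma finite_exh: "finite (exh n :: 'x::countable set)"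
proof -
  have "(exh n :: 'x set) = to_nat -` {..<n}" unfolding exh_def by auto
  thus ?thesis using finite_vimageI[OF finite_lessThan[of n] inj_to_nat] by simp
qed

lemma filterlim_exh: "filterlim exh (finite_subsets_at_top UNIV) sequentially"
  unfolding filterlim_finite_subsets_at_top
proof (intro allI impI)
  fix X :: "'a set" assume X: "finite X \<and> X \<subseteq> UNIV"
  have "\<forall>n\<ge>Suc (Max (to_nat ` X)). finite (exh n) \<and> X \<subseteq> exh n \<and> exh n \<subseteq> UNIV"
  proof (intro allI impI conjI)
    fix n assume n: "Suc (Max (to_nat ` X)) \<le> n"
    show "finite (exh n)" by (rule finite_exh)
    show "X \<subseteq> exh n"
    proof
      fix x assume "x \<in> X"
      hence "to_nat x \<le> Max (to_nat ` X)" using X by simp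
      thus "x \<in> exh n" using n unfolding exh_def by simp
    qed
  qed simp
  thus "eventually (\<lambda>n. finite (exh n) \<and> X \<subseteq> exh n \<and> exh n \<subseteq> UNIV) sequentially"
    unfolding eventually_sequentially by blast
qed

lemma has_sum_exh:
  fixes f :: "'x::countable \<Rightarrow> 'b::{comm_monoid_add,topological_space}"
  assumes "(f has_sum S) UNIV"
  shows "(\<lambda>n. sum f (exh n)) \<longlonglongrightarrow> S"
proof -
  have "(sum f \<longlongrightarrow> S) (finite_subsets_at_top UNIV)" using assms has_sum_def by blast
  from filterlim_compose[OF this filterlim_exh] show ?thesis by simp
qed

lemma psi_H00: "\<psi>d k \<in> H00 \<psi>d"
  unfolding H00_def
  by (rule CollectI, rule exI[of _ "{k}"], rule exI[of _ "\<lambda>_. 1"]) (simp add: scaleC_one)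

lemma H00_eval:
  fixes \<psi>d :: "'x \<Rightarrow> 'h::chilbert_space"
  assumes lim: "\<forall>v\<in>H00 \<psi>d. (\<lambda>n. cinner (fs n) v) \<longlonglongrightarrow> F v"
    and fin: "finite K" and v: "v = (\<Sum>k\<in>K. scaleC (c k) (\<psi>d k))"
  shows "F v = (\<Sum>k\<in>K. cnj (c k) * F (\<psi>d k))"
proof -
  have vH: "v \<in> H00 \<psi>d" unfolding H00_def using fin v by blast
  have l1: "(\<lambda>n. cinner (fs n) v) \<longlonglongrightarrow> F v" using lim vH by blast
  have eq0: "cinner (fs n) v = (\<Sum>k\<in>K. cnj (c k) * cinner (fs n) (\<psi>d k))" for n
    unfolding v cinner_sum_right cinner_scaleC_right ..
  have eq: "(\<lambda>n. cinner (fs n) v) = (\<lambda>n. \<Sum>k\<in>K. cnj (c k) * cinner (fs n) (\<psi>d k))"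
    using eq0 by (rule ext)
  have l2: "(\<lambda>n. \<Sum>k\<in>K. cnj (c k) * cinner (fs n) (\<psi>d k)) \<longlonglongrightarrow> (\<Sum>k\<in>K. cnj (c k) * F (\<psi>d k))"
    by (rule tendsto_sum, rule tendsto_mult_left, rule bspec[OF lim psi_H00])
  have l1': "(\<lambda>n. \<Sum>k\<in>K. cnj (c k) * cinner (fs n) (\<psi>d k)) \<longlonglongrightarrow> F v"
    using l1 unfolding eq .
  show ?thesis using LIMSEQ_unique[OF l1' l2] .
qed




lemma expansion:
  fixes \<psi> \<psi>d :: "'x \<Rightarrow> 'h::chilbert_space"
  assumes dual: "dual_frame \<psi> \<psi>d"
  shows "((\<lambda>l. cinner (\<psi> l) (\<psi>d k) * cinner f (\<psi>d l)) has_sum cinner f (\<psi>d k)) UNIV"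
proof -
  have hs: "((\<lambda>l. scaleC (cinner f (\<psi>d l)) (\<psi> l)) has_sum f) UNIV"
    using dual unfolding dual_frame_def by blast
  have add: "Modules.additive (\<lambda>x. cinner x (\<psi>d k))"
    by (simp add: Modules.additive_def cinner_add_left)
  have cont: "(\<lambda>x. cinner x (\<psi>d k)) \<midarrow>f\<rightarrow> cinner f (\<psi>d k)"
    using isCont_cinner_left[of f "\<psi>d k", unfolded isCont_def] .
  have "(((\<lambda>x. cinner x (\<psi>d k)) \<circ> (\<lambda>l. scaleC (cinner f (\<psi>d l)) (\<psi> l))) has_sum cinner f (\<psi>d k)) UNIV"
    by (rule has_sum_comm_additive[OF add cont hs])
  thus ?thesis by (simp add: o_def cinner_scaleC_left mult.commute)
qed

lemma coef_V:
  fixes \<psi> \<psi>d :: "'x::countable \<Rightarrow> 'h::chilbert_space"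
  assumes w_pos: "\<forall>k. 0 < w k"
    and dual: "dual_frame \<psi> \<psi>d"
    and G_abs: "\<forall>\<alpha>\<in>lw w. \<forall>k. (\<lambda>l. norm (cinner (\<psi> l) (\<psi>d k) * \<alpha> l)) summable_on UNIV"
    and F: "F \<in> Hinf w \<psi>d"
  shows "coef \<psi>d F \<in> lw w \<and> gram \<psi> \<psi>d (coef \<psi>d F) = coef \<psi>d F"
proof -
  obtain fs where lim: "\<forall>v\<in>H00 \<psi>d. (\<lambda>n. cinner (fs n) v) \<longlonglongrightarrow> F v"
    and bdd: "bdd_above {norm (cinner (fs n) (\<psi>d k)) * w k | n k. True}"
    using F unfolding Hinf_def by blast
  obtain C where bnd: "\<And>n k. norm (cinner (fs n) (\<psi>d k)) * w k \<le> C"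
    using bdd unfolding bdd_above_def by blast
  have limk: "(\<lambda>n. cinner (fs n) (\<psi>d k)) \<longlonglongrightarrow> F (\<psi>d k)" for k
    by (rule bspec[OF lim psi_H00])
  have C0: "0 \<le> C" using bnd[of 0 undefined] w_pos
    by (meson norm_ge_zero order_trans zero_le_mult_iff less_imp_le)
  have Fb: "norm (F (\<psi>d k)) * w k \<le> C" for k
  proof (rule tendsto_le[OF trivial_limit_sequentially tendsto_const])
    show "(\<lambda>n. norm (cinner (fs n) (\<psi>d k)) * w k) \<longlonglongrightarrow> norm (F (\<psi>d k)) * w k"
      by (rule tendsto_mult_right, rule tendsto_norm, rule limk)
    show "\<forall>\<^sub>F n in sequentially. norm (cinner (fs n) (\<psi>d k)) * w k \<le> C"
      using bnd by simp
  qed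
  have inlw: "coef \<psi>d F \<in> lw w"
    unfolding lw_def coef_def using Fb by (auto intro!: bdd_aboveI2)
  define \<beta> where "\<beta> l = complex_of_real (C / w l)" for l
  have \<beta>lw: "\<beta> \<in> lw w"
  proof -
    have "norm (\<beta> l) * w l = C" for l
      using w_pos[rule_format, of l] C0 by (simp add: \<beta>_def norm_divide)
    thus ?thesis unfolding lw_def by (auto intro!: bdd_aboveI2)
  qed
  have "gram \<psi> \<psi>d (coef \<psi>d F) k = coef \<psi>d F k" for k
  proof -
    define s where "s n l = cinner (\<psi> l) (\<psi>d k) * cinner (fs n) (\<psi>d l)" for n l
    define g where "g l = norm (cinner (\<psi> l) (\<psi>d k) * \<beta> l)" for l
    have gs: "g summable_on UNIV" unfolding g_def using G_abs \<beta>lw by blast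
    have sb: "norm (s n l) \<le> g l" for n l
    proof -
      have "norm (cinner (fs n) (\<psi>d l)) \<le> C / w l"
        using bnd[of n l] w_pos by (simp add: pos_le_divide_eq)
      hence "norm (cinner (\<psi> l) (\<psi>d k)) * norm (cinner (fs n) (\<psi>d l))
             \<le> norm (cinner (\<psi> l) (\<psi>d k)) * (C / w l)"
        by (rule mult_left_mono) simp
      moreover have "norm (\<beta> l) = C / w l"
        using w_pos[rule_format, of l] C0 by (simp add: \<beta>_def norm_divide)
      ultimately show ?thesis unfolding s_def g_def by (simp add: norm_mult)
    qed
    have sl: "(\<lambda>n. s n l) \<longlonglongrightarrow> cinner (\<psi> l) (\<psi>d k) * F (\<psi>d l)" for l
      unfolding s_def by (rule tendsto_mult_left, rule limk)
    have c1: "(\<lambda>n. infsum (s n) UNIV) \<longlonglongrightarrow> infsum (\<lambda>l. cinner (\<psi> l) (\<psi>d k) * F (\<psi>d l)) UNIV"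
      by (rule infsum_dominated[OF gs sb sl])
    have e: "infsum (s n) UNIV = cinner (fs n) (\<psi>d k)" for n
      unfolding s_def using expansion[OF dual, of k "fs n"] by (simp add: infsumI)
    have c2: "(\<lambda>n. infsum (s n) UNIV) \<longlonglongrightarrow> F (\<psi>d k)"
      unfolding e by (rule limk)
    show ?thesis unfolding gram_def coef_def using LIMSEQ_unique[OF c1 c2] by simp
  qed
  thus ?thesis using inlw by blast
qed


lemma Hinf_D:
  assumes "F \<in> Hinf w \<psi>d"
  obtains fs C where "\<forall>v\<in>H00 \<psi>d. (\<lambda>n. cinner (fs n) v) \<longlonglongrightarrow> F v"
    and "\<And>n k. norm (cinner (fs n) (\<psi>d k)) * w k \<le> C"
    and "\<And>v. v \<notin> H00 \<psi>d \<Longrightarrow> F v = 0"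
proof -
  obtain fs where lim: "\<forall>v\<in>H00 \<psi>d. (\<lambda>n. cinner (fs n) v) \<longlonglongrightarrow> F v"
    and bdd: "bdd_above {norm (cinner (fs n) (\<psi>d k)) * w k | n k. True}"
    using assms unfolding Hinf_def by blast
  obtain C where bnd: "\<And>n k. norm (cinner (fs n) (\<psi>d k)) * w k \<le> C"
    using bdd unfolding bdd_above_def by blast
  have z: "\<And>v. v \<notin> H00 \<psi>d \<Longrightarrow> F v = 0" using assms unfolding Hinf_def Hbar_def by blast
  show ?thesis by (rule that[OF lim bnd z])
qed

lemma Hinf_I:
  assumes lim: "\<forall>v\<in>H00 \<psi>d. (\<lambda>n. cinner (fs n) v) \<longlonglongrightarrow> F v"
    and bnd: "\<And>n k. norm (cinner (fs n) (\<psi>d k)) * w k \<le> C"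
    and z: "\<And>v. v \<notin> H00 \<psi>d \<Longrightarrow> F v = 0"
  shows "F \<in> Hinf w \<psi>d"
proof -
  have "bdd_above {norm (cinner (fs n) (\<psi>d k)) * w k | n k. True}"
    using bnd by (auto simp: bdd_above_def)
  moreover have "F \<in> Hbar \<psi>d" unfolding Hbar_def using lim z by blast
  ultimately show ?thesis unfolding Hinf_def using lim by blast
qed

lemma lin_Hinf:
  fixes \<psi>d :: "'x \<Rightarrow> 'h::chilbert_space"
  assumes w_pos: "\<forall>k. 0 < w k" and F: "F \<in> Hinf w \<psi>d" and G: "G \<in> Hinf w \<psi>d"
  shows "(\<lambda>v. a * F v + b * G v) \<in> Hinf w \<psi>d"
proof -
  obtain fs C1 where limF: "\<forall>v\<in>H00 \<psi>d. (\<lambda>n. cinner (fs n) v) \<longlonglongrightarrow> F v"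
    and bF: "\<And>n k. norm (cinner (fs n) (\<psi>d k)) * w k \<le> C1"
    and zF: "\<And>v. v \<notin> H00 \<psi>d \<Longrightarrow> F v = 0" by (rule Hinf_D[OF F]) fast
  obtain gs C2 where limG: "\<forall>v\<in>H00 \<psi>d. (\<lambda>n. cinner (gs n) v) \<longlonglongrightarrow> G v"
    and bG: "\<And>n k. norm (cinner (gs n) (\<psi>d k)) * w k \<le> C2"
    and zG: "\<And>v. v \<notin> H00 \<psi>d \<Longrightarrow> G v = 0" by (rule Hinf_D[OF G]) fast
  define hs where "hs n = scaleC a (fs n) + scaleC b (gs n)" for n
  have hc: "cinner (hs n) v = a * cinner (fs n) v + b * cinner (gs n) v" for n v
    unfolding hs_def by (simp add: cinner_add_left cinner_scaleC_left)
  show ?thesis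
  proof (rule Hinf_I[where fs=hs and C="norm a * C1 + norm b * C2"])
    show "\<forall>v\<in>H00 \<psi>d. (\<lambda>n. cinner (hs n) v) \<longlonglongrightarrow> a * F v + b * G v"
    proof
      fix v assume v: "v \<in> H00 \<psi>d"
      show "(\<lambda>n. cinner (hs n) v) \<longlonglongrightarrow> a * F v + b * G v"
        unfolding hc
        by (rule tendsto_add; rule tendsto_mult_left) (use v limF limG in auto)
    qed
    show "norm (cinner (hs n) (\<psi>d k)) * w k \<le> norm a * C1 + norm b * C2" for n k
    proof -
      have wk: "0 \<le> w k" using w_pos less_imp_le by blast
      have "norm (cinner (hs n) (\<psi>d k)) * w k
          \<le> (norm a * norm (cinner (fs n) (\<psi>d k)) + norm b * norm (cinner (gs n) (\<psi>d k))) * w k"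
        unfolding hc using wk
        by (intro mult_right_mono) (auto intro: order_trans[OF norm_triangle_ineq] simp: norm_mult)
      also have "\<dots> = norm a * (norm (cinner (fs n) (\<psi>d k)) * w k) + norm b * (norm (cinner (gs n) (\<psi>d k)) * w k)"
        by (simp add: algebra_simps)
      also have "\<dots> \<le> norm a * C1 + norm b * C2"
        by (intro add_mono mult_left_mono bF bG) auto
      finally show ?thesis .
    qed
    show "a * F v + b * G v = 0" if "v \<notin> H00 \<psi>d" for v using zF zG that by simp
  qed
qed

lemma inj_Hinf:
  fixes \<psi>d :: "'x \<Rightarrow> 'h::chilbert_space"
  assumes F: "F \<in> Hinf w \<psi>d" and G: "G \<in> Hinf w \<psi>d" and eq: "coef \<psi>d F = coef \<psi>d G"
  shows "F = G"
proof
  fix v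
  obtain fs C1 where limF: "\<forall>v\<in>H00 \<psi>d. (\<lambda>n. cinner (fs n) v) \<longlonglongrightarrow> F v"
    and bF: "\<And>n k. norm (cinner (fs n) (\<psi>d k)) * w k \<le> C1"
    and zF: "\<And>v. v \<notin> H00 \<psi>d \<Longrightarrow> F v = 0" by (rule Hinf_D[OF F]) fast
  obtain gs C2 where limG: "\<forall>v\<in>H00 \<psi>d. (\<lambda>n. cinner (gs n) v) \<longlonglongrightarrow> G v"
    and bG: "\<And>n k. norm (cinner (gs n) (\<psi>d k)) * w k \<le> C2"
    and zG: "\<And>v. v \<notin> H00 \<psi>d \<Longrightarrow> G v = 0" by (rule Hinf_D[OF G]) fast
  have e: "F (\<psi>d k) = G (\<psi>d k)" for k using eq unfolding coef_def by meson
  show "F v = G v"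
  proof (cases "v \<in> H00 \<psi>d")
    case True
    then obtain K c where K: "finite K" "v = (\<Sum>k\<in>K. scaleC (c k) (\<psi>d k))"
      unfolding H00_def by blast
    show ?thesis using H00_eval[OF limF K] H00_eval[OF limG K] e by simp
  next
    case False thus ?thesis using zF zG by simp
  qed
qed


lemma lw_le: "\<beta> \<in> lw w \<Longrightarrow> norm (\<beta> k) * w k \<le> lw_norm w \<beta>"
  unfolding lw_def lw_norm_def by (auto intro: cSUP_upper)

lemma lw_norm_mono:
  assumes "\<alpha> \<in> lw w" "\<And>k. norm (\<beta> k) * w k \<le> norm (\<alpha> k) * w k"
  shows "lw_norm w \<beta> \<le> lw_norm w \<alpha>"
  unfolding lw_norm_def[of w \<beta>]
proof (rule cSUP_least)
  show "UNIV \<noteq> {}" by simp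
  fix k show "norm (\<beta> k) * w k \<le> lw_norm w \<alpha>"
    using assms(2)[of k] lw_le[OF assms(1), of k] by linarith
qed

lemma surj_Hinf:
  fixes \<psi> \<psi>d :: "'x::countable \<Rightarrow> 'h::chilbert_space"
  assumes w_pos: "\<forall>k. 0 < w k"
    and G_abs: "\<forall>\<alpha>\<in>lw w. \<forall>k. (\<lambda>l. norm (cinner (\<psi> l) (\<psi>d k) * \<alpha> l)) summable_on UNIV"
    and G_bdd: "\<exists>M. \<forall>\<alpha>\<in>lw w. gram \<psi> \<psi>d \<alpha> \<in> lw w \<and>
                   lw_norm w (gram \<psi> \<psi>d \<alpha>) \<le> M * lw_norm w \<alpha>"
    and \<alpha>: "\<alpha> \<in> lw w" and g\<alpha>: "gram \<psi> \<psi>d \<alpha> = \<alpha>"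
  shows "\<exists>F\<in>Hinf w \<psi>d. coef \<psi>d F = \<alpha>"
proof -
  obtain M where Mb: "\<forall>\<beta>\<in>lw w. gram \<psi> \<psi>d \<beta> \<in> lw w \<and> lw_norm w (gram \<psi> \<psi>d \<beta>) \<le> M * lw_norm w \<beta>"
    using G_bdd by blast
  define fn where "fn n = (\<Sum>l\<in>exh n. scaleC (\<alpha> l) (\<psi> l))" for n
  define \<alpha>n where "\<alpha>n n l = (if l \<in> exh n then \<alpha> l else 0)" for n l
  have ci: "cinner (fn n) (\<psi>d k) = (\<Sum>l\<in>exh n. cinner (\<psi> l) (\<psi>d k) * \<alpha> l)" for n k
    unfolding fn_def cinner_sum_left cinner_scaleC_left by (simp add: mult.commute)
  have wk: "0 \<le> w k" for k using w_pos less_imp_le by blast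
  have \<alpha>nle: "norm (\<alpha>n n l) * w l \<le> norm (\<alpha> l) * w l" for n l
    unfolding \<alpha>n_def using wk[of l] by simp
  have \<alpha>nlw: "\<alpha>n n \<in> lw w" for n
    unfolding lw_def using \<alpha>nle lw_le[OF \<alpha>]
    by (auto intro!: bdd_aboveI2 intro: order_trans)
  have gn: "gram \<psi> \<psi>d (\<alpha>n n) k = (\<Sum>l\<in>exh n. cinner (\<psi> l) (\<psi>d k) * \<alpha> l)" for n k
  proof -
    have "gram \<psi> \<psi>d (\<alpha>n n) k = infsum (\<lambda>l. cinner (\<psi> l) (\<psi>d k) * \<alpha> l) (exh n)"
      unfolding gram_def by (rule infsum_cong_neutral) (auto simp: \<alpha>n_def)
    thus ?thesis by (simp add: finite_exh)
  qed
  define B where "B = max M 0 * lw_norm w \<alpha>"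
  have bnd: "norm (cinner (fn n) (\<psi>d k)) * w k \<le> B" for n k
  proof -
    have n0: "0 \<le> lw_norm w (\<alpha>n n)"
      using lw_le[OF \<alpha>nlw, of n k] wk[of k] by (meson norm_ge_zero order_trans zero_le_mult_iff)
    have "norm (cinner (fn n) (\<psi>d k)) * w k = norm (gram \<psi> \<psi>d (\<alpha>n n) k) * w k"
      by (simp add: ci gn)
    also have "\<dots> \<le> lw_norm w (gram \<psi> \<psi>d (\<alpha>n n))"
      by (rule lw_le[OF conjunct1[OF bspec[OF Mb \<alpha>nlw]]])
    also have "\<dots> \<le> M * lw_norm w (\<alpha>n n)" by (rule conjunct2[OF bspec[OF Mb \<alpha>nlw]])
    also have "\<dots> \<le> max M 0 * lw_norm w (\<alpha>n n)" using n0 by (intro mult_right_mono) auto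
    also have "\<dots> \<le> max M 0 * lw_norm w \<alpha>"
      by (intro mult_left_mono lw_norm_mono[OF \<alpha>] \<alpha>nle) auto
    finally show ?thesis unfolding B_def .
  qed
  have limk: "(\<lambda>n. cinner (fn n) (\<psi>d k)) \<longlonglongrightarrow> \<alpha> k" for k
  proof -
    have "(\<lambda>l. cinner (\<psi> l) (\<psi>d k) * \<alpha> l) summable_on UNIV"
      by (rule abs_summable_summable[OF spec[OF bspec[OF G_abs \<alpha>], of k]])
    hence "((\<lambda>l. cinner (\<psi> l) (\<psi>d k) * \<alpha> l) has_sum gram \<psi> \<psi>d \<alpha> k) UNIV"
      unfolding gram_def by simp
    hence "((\<lambda>l. cinner (\<psi> l) (\<psi>d k) * \<alpha> l) has_sum \<alpha> k) UNIV" using g\<alpha> by simp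
    from has_sum_exh[OF this] show ?thesis unfolding ci .
  qed
  define Fa where "Fa v = (if v \<in> H00 \<psi>d then lim (\<lambda>n. cinner (fn n) v) else 0)" for v
  have conv: "(\<lambda>n. cinner (fn n) v) \<longlonglongrightarrow> Fa v" if v: "v \<in> H00 \<psi>d" for v
  proof -
    obtain K c where K: "finite K" "v = (\<Sum>k\<in>K. scaleC (c k) (\<psi>d k))"
      using v unfolding H00_def by blast
    have eq0: "cinner (fn n) v = (\<Sum>k\<in>K. cnj (c k) * cinner (fn n) (\<psi>d k))" for n
      unfolding K(2) cinner_sum_right cinner_scaleC_right ..
    have "(\<lambda>n. \<Sum>k\<in>K. cnj (c k) * cinner (fn n) (\<psi>d k)) \<longlonglongrightarrow> (\<Sum>k\<in>K. cnj (c k) * \<alpha> k)"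
      by (rule tendsto_sum, rule tendsto_mult_left, rule limk)
    hence "convergent (\<lambda>n. cinner (fn n) v)" unfolding eq0 convergent_def by blast
    hence "(\<lambda>n. cinner (fn n) v) \<longlonglongrightarrow> lim (\<lambda>n. cinner (fn n) v)"
      by (simp add: convergent_LIMSEQ_iff)
    thus ?thesis unfolding Fa_def using v by simp
  qed
  have FaH: "Fa \<in> Hinf w \<psi>d"
    by (rule Hinf_I[where fs=fn and C=B]) (use conv bnd in \<open>auto simp: Fa_def\<close>)
  have "coef \<psi>d Fa = \<alpha>"
  proof
    fix k
    have "Fa (\<psi>d k) = \<alpha> k" using LIMSEQ_unique[OF conv[OF psi_H00] limk] .
    thus "coef \<psi>d Fa k = \<alpha> k" unfolding coef_def .
  qed
  thus ?thesis using FaH by blast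
qed

theorem mainTheorem9:
  fixes \<psi> \<psi>d :: "'x::countable \<Rightarrow> 'h::chilbert_space"
    and w :: "'x \<Rightarrow> real"
    and V :: "('x \<Rightarrow> complex) set"
  assumes separable: "\<exists>D::'h set. countable D \<and> closure D = UNIV"
    and w_pos: "\<forall>k. 0 < w k"
    and dual: "dual_frame \<psi> \<psi>d"
    and G_abs: "\<forall>\<alpha>\<in>lw w. \<forall>k. (\<lambda>l. norm (cinner (\<psi> l) (\<psi>d k) * \<alpha> l)) summable_on UNIV"
    and G_bdd: "\<exists>M. \<forall>\<alpha>\<in>lw w. gram \<psi> \<psi>d \<alpha> \<in> lw w \<and>
                   lw_norm w (gram \<psi> \<psi>d \<alpha>) \<le> M * lw_norm w \<alpha>"
    and V_def: "V = {\<alpha> \<in> lw w. gram \<psi> \<psi>d \<alpha> = \<alpha>}"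
  shows "coef \<psi>d ` Hinf w \<psi>d \<subseteq> V \<and>
    (\<forall>F\<in>Hinf w \<psi>d. \<forall>G\<in>Hinf w \<psi>d. \<forall>a b::complex.
           (\<lambda>v. a * F v + b * G v) \<in> Hinf w \<psi>d \<and>
           coef \<psi>d (\<lambda>v. a * F v + b * G v) = (\<lambda>k. a * coef \<psi>d F k + b * coef \<psi>d G k)) \<and>
    (\<forall>F\<in>Hinf w \<psi>d. lw_norm w (coef \<psi>d F) = Hinf_norm w \<psi>d F) \<and>
    bij_betw (coef \<psi>d) (Hinf w \<psi>d) V"
proof -
  have img: "coef \<psi>d ` Hinf w \<psi>d \<subseteq> V"
    using coef_V[OF w_pos dual G_abs] unfolding V_def by auto
  have lin: "\<forall>F\<in>Hinf w \<psi>d. \<forall>G\<in>Hinf w \<psi>d. \<forall>a b::complex.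
           (\<lambda>v. a * F v + b * G v) \<in> Hinf w \<psi>d \<and>
           coef \<psi>d (\<lambda>v. a * F v + b * G v) = (\<lambda>k. a * coef \<psi>d F k + b * coef \<psi>d G k)"
  proof (intro ballI allI conjI)
    fix F G a b assume "F \<in> Hinf w \<psi>d" "G \<in> Hinf w \<psi>d"
    thus "(\<lambda>v. a * F v + b * G v) \<in> Hinf w \<psi>d" by (rule lin_Hinf[OF w_pos])
    show "coef \<psi>d (\<lambda>v. a * F v + b * G v) = (\<lambda>k. a * coef \<psi>d F k + b * coef \<psi>d G k)"
      unfolding coef_def ..
  qed
  have nrm: "\<forall>F\<in>Hinf w \<psi>d. lw_norm w (coef \<psi>d F) = Hinf_norm w \<psi>d F"
    unfolding Hinf_norm_def by simp
  have inj: "inj_on (coef \<psi>d) (Hinf w \<psi>d)"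
  proof (rule inj_onI)
    fix F G assume "F \<in> Hinf w \<psi>d" "G \<in> Hinf w \<psi>d" "coef \<psi>d F = coef \<psi>d G"
    thus "F = G" by (rule inj_Hinf)
  qed
  have sur: "V \<subseteq> coef \<psi>d ` Hinf w \<psi>d"
  proof
    fix \<alpha> assume "\<alpha> \<in> V"
    hence "\<alpha> \<in> lw w" "gram \<psi> \<psi>d \<alpha> = \<alpha>" unfolding V_def by auto
    from surj_Hinf[OF w_pos G_abs G_bdd this] show "\<alpha> \<in> coef \<psi>d ` Hinf w \<psi>d" by force
  qed
  have "bij_betw (coef \<psi>d) (Hinf w \<psi>d) V"
    unfolding bij_betw_def using inj img sur by blast
  thus ?thesis using img lin nrm by blast
qed


end
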